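(* $C_{\mathbb Z}=C^0_{\mathbb Z}=3$.
   Context: $\mathbb Z$ is regarded as the infinite path graph with vertex set $\mathbb Z$ and edges $\{j,j+1\}$, $j\in\mathbb Z$, with the graph distance $d(i,j)=|i-j|$. A measure $\mu$ is a weight function $\mu:\mathbb Z\to(0,\infty)$, with $\mu(A)=\sum_{v\in A}\mu(v)$. Closed balls are $B(x,r)=\{y:d(x,y)\le r\}$. The doubling constant of $\mu$ is $C_\mu=\sup\{\mu(B(x,2k+1))/\mu(B(x,k)): x\in \mathbb Z,\ k\in\{0,1,2,\dots\}\}$, and $\mu$ is doubling if $C_\mu<\infty$. $C_{\mathbb Z}=\inf\{C_\mu:\mu\text{ doubling}\}$; $C^0_\mu=\sup_{x}\mu(B(x,1))/\mu(x)$ and $C^0_{\mathbb Z}=\inf_\mu C^0_\mu$, the infimum over doubling measures. *)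

theory Defs
  imports "HOL-Library.Extended_Real"
begin

definition zball :: "int \<Rightarrow> nat \<Rightarrow> int set" where
  "zball x r = {y. \<bar>x - y\<bar> \<le> int r}"

definition zmeas :: "(int \<Rightarrow> real) \<Rightarrow> int set \<Rightarrow> real" where
  "zmeas \<mu> A = (\<Sum>v\<in>A. \<mu> v)"

definition is_measure :: "(int \<Rightarrow> real) \<Rightarrow> bool" where
  "is_measure \<mu> \<longleftrightarrow> (\<forall>v. \<mu> v > 0)"

definition doubling_const :: "(int \<Rightarrow> real) \<Rightarrow> ereal" where
  "doubling_const \<mu> =
     (SUP p\<in>(UNIV :: (int \<times> nat) set).
        ereal (zmeas \<mu> (zball (fst p) (2 * snd p + 1)) / zmeas \<mu> (zball (fst p) (snd p))))"

definition doubling :: "(int \<Rightarrow> real) \<Rightarrow> bool" where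
  "doubling \<mu> \<longleftrightarrow> is_measure \<mu> \<and> doubling_const \<mu> < \<infinity>"

definition C_Z :: ereal where
  "C_Z = (INF \<mu>\<in>{\<mu>. doubling \<mu>}. doubling_const \<mu>)"

definition C0 :: "(int \<Rightarrow> real) \<Rightarrow> ereal" where
  "C0 \<mu> = (SUP x\<in>(UNIV :: int set). ereal (zmeas \<mu> (zball x 1) / \<mu> x))"

definition C0_Z :: ereal where
  "C0_Z = (INF \<mu>\<in>{\<mu>. doubling \<mu>}. C0 \<mu>)"

end

theory Submission
  imports Defs
begin

lemma no_pos_seq:
  fixes \<mu> :: "int \<Rightarrow> real"
  assumes pos: "\<And>x. \<mu> x > 0"
    and ineq: "\<And>x. \<mu> (x-1) + \<mu> (x+1) \<le> c * \<mu> x"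
    and c2: "c < 2"
  shows False
proof -
  have "\<mu> (0-1) + \<mu> (0+1) \<le> c * \<mu> 0" by (rule ineq)
  moreover have "\<mu> (0-1) > 0" "\<mu> (0+1) > 0" "\<mu> 0 > 0" using pos by auto
  ultimately have cpos: "c > 0"
    by (metis add_pos_pos less_le_trans zero_less_mult_pos2)
  define r where "r n = \<mu> (int n + 1) / \<mu> (int n)" for n :: nat
  define d where "d = 1 - c^2/4"
  have "c*c < 2*2" using cpos c2 by (intro mult_strict_mono) auto
  then have dpos: "d > 0" unfolding d_def by (simp add: power2_eq_square)
  have rpos: "r n > 0" for n unfolding r_def using pos by simp
  have rc: "r n < c" for n
  proof -
    have "\<mu> (int n - 1) + \<mu> (int n + 1) \<le> c * \<mu> (int n)" by (rule ineq)
    moreover have "\<mu> (int n - 1) > 0" using pos by simp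
    ultimately have "\<mu> (int n + 1) < c * \<mu> (int n)" by linarith
    then show ?thesis unfolding r_def using pos[of "int n"] by (simp add: divide_less_eq)
  qed
  have step: "r (Suc n) \<le> r n - d / c" for n
  proof -
    have "\<mu> (int n + 1 - 1) + \<mu> (int n + 1 + 1) \<le> c * \<mu> (int n + 1)" by (rule ineq)
    hence h: "\<mu> (int n) + \<mu> (int n + 2) \<le> c * \<mu> (int n + 1)" by (simp add: add.assoc)
    have a: "\<mu> (int n) > 0" "\<mu> (int n + 1) > 0" using pos by auto
    have "r (Suc n) = \<mu> (int n + 2) / \<mu> (int n + 1)" unfolding r_def
      by (simp add: add.assoc add.commute)
    also have "\<dots> \<le> c - \<mu> (int n) / \<mu> (int n + 1)"
      using h a by (simp add: field_simps)
    also have "\<mu> (int n) / \<mu> (int n + 1) = 1 / r n" unfolding r_def by simp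
    finally have r1: "r (Suc n) \<le> c - 1 / r n" .
    have "c - 1 / r n - r n = - ((r n - c/2)^2 + d) / r n"
      using rpos[of n] unfolding d_def by (simp add: field_simps power2_eq_square)
    also have "\<dots> \<le> - d / r n"
      using rpos[of n] by (intro divide_right_mono) auto
    also have "\<dots> \<le> - d / c"
      using rpos[of n] rc[of n] dpos cpos by (simp add: frac_le)
    finally show ?thesis using r1 by linarith
  qed
  have iter: "r n \<le> r 0 - real n * (d / c)" for n
  proof (induction n)
    case 0 then show ?case by simp
  next
    case (Suc n) then show ?case using step[of n] by (simp add: algebra_simps)
  qed
  have dc: "d / c > 0" using dpos cpos by simp
  obtain n :: nat where "r 0 < real n * (d / c)"
    using dc ex_less_of_nat_mult by blast
  then show False using iter[of n] rpos[of n] by linarith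
qed

lemma zball1: "zball x 1 = {x - 1, x, x + 1}"
  unfolding zball_def by auto

lemma zball0: "zball x 0 = {x}"
  unfolding zball_def by auto

lemma zmeas1: "zmeas \<mu> (zball x 1) = \<mu> (x-1) + \<mu> x + \<mu> (x+1)"
  unfolding zball1 zmeas_def by simp

lemma C0_ge3:
  assumes "is_measure \<mu>"
  shows "C0 \<mu> \<ge> 3"
proof (rule ccontr)
  assume "\<not> C0 \<mu> \<ge> 3"
  hence lt: "C0 \<mu> < 3" by simp
  then obtain e where e: "C0 \<mu> < e" "e < 3" using ereal_dense2 by blast
  have "e \<noteq> -\<infinity>" using e by auto
  moreover have "e \<noteq> \<infinity>" using e by auto
  ultimately obtain d where d: "e = ereal d" by (cases e) auto
  have pos: "\<And>x. \<mu> x > 0" using assms unfolding is_measure_def by auto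
  have "\<mu> (x-1) + \<mu> (x+1) \<le> (d - 1) * \<mu> x" for x
  proof -
    have "ereal (zmeas \<mu> (zball x 1) / \<mu> x) \<le> C0 \<mu>"
      unfolding C0_def by (rule SUP_upper) simp
    hence "ereal (zmeas \<mu> (zball x 1) / \<mu> x) < ereal d" using e d by (metis le_less_trans)
    hence "zmeas \<mu> (zball x 1) / \<mu> x < d" by simp
    hence "zmeas \<mu> (zball x 1) < d * \<mu> x" using pos[of x] by (simp add: divide_less_eq)
    thus ?thesis unfolding zmeas1 by (simp add: algebra_simps)
  qed
  moreover have "d - 1 < 2" using e d by simp
  ultimately show False using no_pos_seq[of \<mu> "d - 1"] pos by blast
qed

lemma C0_le_dc: "C0 \<mu> \<le> doubling_const \<mu>"
  unfolding C0_def doubling_const_def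
proof (rule SUP_least)
  fix x :: int
  have "ereal (zmeas \<mu> (zball x 1) / \<mu> x) =
        ereal (zmeas \<mu> (zball (fst (x, 0::nat)) (2 * snd (x, 0::nat) + 1)) /
               zmeas \<mu> (zball (fst (x, 0::nat)) (snd (x, 0::nat))))"
    by (simp add: zball0 zmeas_def)
  also have "\<dots> \<le> (SUP p\<in>(UNIV :: (int \<times> nat) set).
        ereal (zmeas \<mu> (zball (fst p) (2 * snd p + 1)) / zmeas \<mu> (zball (fst p) (snd p))))"
    by (rule SUP_upper) simp
  finally show "ereal (zmeas \<mu> (zball x 1) / \<mu> x) \<le> (SUP p\<in>(UNIV :: (int \<times> nat) set).
        ereal (zmeas \<mu> (zball (fst p) (2 * snd p + 1)) / zmeas \<mu> (zball (fst p) (snd p))))" .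
qed

lemma zball_eq: "zball x n = {x - int n .. x + int n}"
  unfolding zball_def by auto

lemma zmeas_one: "zmeas (\<lambda>_. 1) (zball x n) = 2 * real n + 1"
  unfolding zmeas_def zball_eq by simp

lemma one_doubling: "doubling_const (\<lambda>_. 1) \<le> 3"
  unfolding doubling_const_def
proof (rule SUP_least)
  fix p :: "int \<times> nat"
  have "(2 * real (2 * snd p + 1) + 1) / (2 * real (snd p) + 1) \<le> 3"
    by (simp add: divide_le_eq)
  then show "ereal (zmeas (\<lambda>_. 1) (zball (fst p) (2 * snd p + 1)) /
      zmeas (\<lambda>_. 1) (zball (fst p) (snd p))) \<le> 3"
    unfolding zmeas_one by simp
qed

lemma one_is_doubling: "doubling (\<lambda>_. 1)"
proof -
  have "doubling_const (\<lambda>_. 1) < \<infinity>"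
    using one_doubling by (rule le_less_trans) simp
  then show ?thesis unfolding doubling_def is_measure_def by simp
qed

lemma one_C0: "C0 (\<lambda>_. 1) \<le> 3"
  unfolding C0_def
proof (rule SUP_least)
  fix x
  show "ereal (zmeas (\<lambda>_. 1) (zball x 1) / 1) \<le> 3" unfolding zmeas1 by simp
qed

theorem theorem4p2:
  shows "C_Z = 3 \<and> C0_Z = 3"
proof
  have le1: "C_Z \<le> 3" unfolding C_Z_def
    using INF_lower[of "\<lambda>_. 1" "{\<mu>. doubling \<mu>}" doubling_const] one_doubling one_is_doubling
    by (metis mem_Collect_eq order_trans)
  have ge1: "C_Z \<ge> 3" unfolding C_Z_def
  proof (rule INF_greatest)
    fix \<mu> assume "\<mu> \<in> {\<mu>. doubling \<mu>}"
    hence "is_measure \<mu>" unfolding doubling_def by simp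
    then show "3 \<le> doubling_const \<mu>" using C0_ge3 C0_le_dc order_trans by blast
  qed
  show "C_Z = 3" using le1 ge1 by simp
  have le2: "C0_Z \<le> 3" unfolding C0_Z_def
    using INF_lower[of "\<lambda>_. 1" "{\<mu>. doubling \<mu>}" C0] one_C0 one_is_doubling
    by (metis mem_Collect_eq order_trans)
  have ge2: "C0_Z \<ge> 3" unfolding C0_Z_def
  proof (rule INF_greatest)
    fix \<mu> assume "\<mu> \<in> {\<mu>. doubling \<mu>}"
    hence "is_measure \<mu>" unfolding doubling_def by simp
    then show "3 \<le> C0 \<mu>" using C0_ge3 by blast
  qed
  show "C0_Z = 3" using le2 ge2 by simp
qed

end
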